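(* Assume the setting described in the context, let $\delta=\sum_{k=1}^{L-1}\ell_k(\ell_{k-1}+1)$, let $\theta=(\theta_j)_{j\in\mathbb N\cap[0,\delta]}$ be a function from $\mathbb N\cap[0,\delta]$ to $\mathbb R$, and let $\mathbb L\colon\mathbb R^{\ell_L(\ell_{L-1}+1)}\to\mathbb R$ satisfy for all $v=(v_1,\dots,v_{\ell_L(\ell_{L-1}+1)})$ that $\mathbb L(v)=\mathcal L_\infty(\theta_1,\theta_2,\dots,\theta_\delta,v_1,v_2,\dots,v_{\ell_L(\ell_{L-1}+1)})$. Then for all $v,w\in\mathbb R^{\ell_L(\ell_{L-1}+1)}$, $\lambda\in[0,1]$ it holds that $\mathbb L(\lambda v+(1-\lambda)w)\le\lambda\mathbb L(v)+(1-\lambda)\mathbb L(w)$.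
   Context: Setting. Let $L,\mathfrak d\in\mathbb N=\{1,2,\dots\}$, $(\ell_k)_{k\in\mathbb N_0}\subseteq\mathbb N$, $a\in\mathbb R$, $b\in(a,\infty)$ with $\mathfrak d=\sum_{k=1}^L\ell_k(\ell_{k-1}+1)$; let $\mathbf d_k=\sum_{h=1}^k\ell_h(\ell_{h-1}+1)$ for $k\in\mathbb N_0$. For $\theta=(\theta_1,\dots,\theta_{\mathfrak d})\in\mathbb R^{\mathfrak d}$, $k\in\{1,\dots,L\}$, $i\in\{1,\dots,\ell_k\}$, $j\in\{1,\dots,\ell_{k-1}\}$ let $\mathfrak w^{k,\theta}_{i,j}=\theta_{(i-1)\ell_{k-1}+j+\mathbf d_{k-1}}$ and $\mathfrak b^{k,\theta}_i=\theta_{\ell_k\ell_{k-1}+i+\mathbf d_{k-1}}$, let $\mathfrak w^{k,\theta}=(\mathfrak w^{k,\theta}_{i,j})_{i,j}\in\mathbb R^{\ell_k\times\ell_{k-1}}$, $\mathfrak b^{k,\theta}=(\mathfrak b^{k,\theta}_1,\dots,\mathfrak b^{k,\theta}_{\ell_k})\in\mathbb R^{\ell_k}$, and $\mathcal A^\theta_k(x)=\mathfrak b^{k,\theta}+\mathfrak w^{k,\theta}x$. Let $\mathfrak M_\infty(x_1,\dots,x_n)=(\max\{x_1,0\},\dots,\max\{x_n,0\})$ and $\|\cdot\|$ the Euclidean norm. Define $\mathcal N^{k,\theta}_\infty\colon\mathbb R^{\ell_0}\to\mathbb R^{\ell_k}$, $k\in\{1,\dots,L\}$, by $\mathcal N^{1,\theta}_\infty=\mathcal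 A^\theta_1$ and $\mathcal N^{k+1,\theta}_\infty(x)=\mathcal A^\theta_{k+1}(\mathfrak M_\infty(\mathcal N^{k,\theta}_\infty(x)))$. Let $\mu$ be a measure on the Borel $\sigma$-algebra of $[a,b]^{\ell_0}$ with $\mu([a,b]^{\ell_0})\in\mathbb R$, let $f\colon[a,b]^{\ell_0}\to\mathbb R^{\ell_L}$ be measurable, and let $\mathcal L_\infty\colon\mathbb R^{\mathfrak d}\to\mathbb R$, $\mathcal L_\infty(\theta)=\int_{[a,b]^{\ell_0}}\|\mathcal N^{L,\theta}_\infty(x)-f(x)\|^2\,\mu(dx)$ (these integrals are real numbers as part of the setting). *)

theory Defs
  imports "HOL-Analysis.Analysis"
begin

text \<open>Layer widths are a function ell :: nat => nat; parameter vectors theta in R^d are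
 represented as functions nat => real using the entries at indices 1..d; vectors in R^n
 likewise use indices 1..n.\<close>

definition dsum :: "(nat \<Rightarrow> nat) \<Rightarrow> nat \<Rightarrow> nat" where
  "dsum ell k = (\<Sum>h=1..k. ell h * (ell (h - 1) + 1))"

definition wgt :: "(nat \<Rightarrow> nat) \<Rightarrow> (nat \<Rightarrow> real) \<Rightarrow> nat \<Rightarrow> nat \<Rightarrow> nat \<Rightarrow> real" where
  "wgt ell \<theta> k i j = \<theta> ((i - 1) * ell (k - 1) + j + dsum ell (k - 1))"

definition bias :: "(nat \<Rightarrow> nat) \<Rightarrow> (nat \<Rightarrow> real) \<Rightarrow> nat \<Rightarrow> nat \<Rightarrow> real" where
  "bias ell \<theta> k i = \<theta> (ell k * ell (k - 1) + i + dsum ell (k - 1))"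

definition affine :: "(nat \<Rightarrow> nat) \<Rightarrow> (nat \<Rightarrow> real) \<Rightarrow> nat \<Rightarrow> (nat \<Rightarrow> real) \<Rightarrow> nat \<Rightarrow> real" where
  "affine ell \<theta> k x = (\<lambda>i. bias ell \<theta> k i + (\<Sum>j=1..ell (k - 1). wgt ell \<theta> k i j * x j))"

definition relu :: "(nat \<Rightarrow> real) \<Rightarrow> nat \<Rightarrow> real" where
  "relu x = (\<lambda>i. max (x i) 0)"

fun realization :: "(nat \<Rightarrow> nat) \<Rightarrow> (nat \<Rightarrow> real) \<Rightarrow> nat \<Rightarrow> (nat \<Rightarrow> real) \<Rightarrow> nat \<Rightarrow> real" where
  "realization ell \<theta> 0 x = x"
| "realization ell \<theta> (Suc 0) x = affine ell \<theta> 1 x"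
| "realization ell \<theta> (Suc (Suc k)) x = affine ell \<theta> (Suc (Suc k)) (relu (realization ell \<theta> (Suc k) x))"

definition sqerr :: "(nat \<Rightarrow> nat) \<Rightarrow> nat \<Rightarrow> ((nat \<Rightarrow> real) \<Rightarrow> nat \<Rightarrow> real) \<Rightarrow> (nat \<Rightarrow> real) \<Rightarrow> (nat \<Rightarrow> real) \<Rightarrow> real" where
  "sqerr ell L f \<theta> x = (\<Sum>i=1..ell L. (realization ell \<theta> L x i - f x i)\<^sup>2)"

definition loss :: "(nat \<Rightarrow> nat) \<Rightarrow> nat \<Rightarrow> (nat \<Rightarrow> real) measure \<Rightarrow> ((nat \<Rightarrow> real) \<Rightarrow> nat \<Rightarrow> real) \<Rightarrow> (nat \<Rightarrow> real) \<Rightarrow> real" where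
  "loss ell L \<mu> f \<theta> = (\<integral>x. sqerr ell L f \<theta> x \<partial>\<mu>)"

definition cube :: "nat \<Rightarrow> real \<Rightarrow> real \<Rightarrow> (nat \<Rightarrow> real) set" where
  "cube n a b = PiE {1..n} (\<lambda>_. {a..b})"

definition cube_borel :: "nat \<Rightarrow> real \<Rightarrow> real \<Rightarrow> (nat \<Rightarrow> real) measure" where
  "cube_borel n a b = restrict_space (PiM {1..n} (\<lambda>_. borel)) (cube n a b)"

end

theory Submission
  imports Defs
begin

lemma dsum_Suc: "dsum ell (Suc k) = dsum ell k + ell (Suc k) * (ell k + 1)"
  by (simp add: dsum_def)

lemma dsum_mono: "k \<le> m \<Longrightarrow> dsum ell k \<le> dsum ell m"
  unfolding dsum_def by (rule sum_mono2) auto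

lemma affine_local:
  assumes "\<And>n. n \<le> dsum ell k \<Longrightarrow> \<theta>1 n = \<theta>2 n" "k \<ge> 1" "i \<in> {1..ell k}"
  shows "affine ell \<theta>1 k y i = affine ell \<theta>2 k y i"
proof -
  obtain m where k: "k = Suc m" using assms(2) by (cases k) auto
  have ds: "dsum ell k = dsum ell m + ell k * (ell m + 1)" using k dsum_Suc by simp
  have b: "bias ell \<theta>1 k i = bias ell \<theta>2 k i"
    unfolding bias_def using assms(3) ds k
    by (intro assms(1)) (auto simp: algebra_simps)
  have w: "wgt ell \<theta>1 k i j = wgt ell \<theta>2 k i j" if "j \<in> {1..ell m}" for j
  proof -
    have "(i - 1) * ell m + j \<le> (i - 1) * ell m + ell m" using that by simp
    also have "\<dots> = i * ell m" using assms(3) by (cases i) auto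
    also have "\<dots> \<le> ell k * ell m" using assms(3) by simp
    finally show ?thesis unfolding wgt_def using ds k
      by (intro assms(1)) (auto simp: algebra_simps)
  qed
  show ?thesis unfolding affine_def using b w k by simp
qed

lemma real_local:
  assumes "\<And>n. n \<le> dsum ell k \<Longrightarrow> \<theta>1 n = \<theta>2 n" "i \<in> {1..ell k}"
  shows "realization ell \<theta>1 k x i = realization ell \<theta>2 k x i"
  using assms
proof (induction ell \<theta>1 k x arbitrary: i rule: realization.induct)
  case (1 ell \<theta> x)
  then show ?case by simp
next
  case (2 ell \<theta> x)
  then show ?case using affine_local[of ell 1 \<theta> \<theta>2] by simp
next
  case (3 ell \<theta> k x)
  have IH: "realization ell \<theta> (Suc k) x j = realization ell \<theta>2 (Suc k) x j"
    if "j \<in> {1..ell (Suc k)}" for j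
    using 3(1)[OF _ that] 3(2) dsum_mono[of "Suc k" "Suc (Suc k)" ell] by auto
  have "affine ell \<theta> (Suc (Suc k)) (relu (realization ell \<theta> (Suc k) x)) i
      = affine ell \<theta>2 (Suc (Suc k)) (relu (realization ell \<theta> (Suc k) x)) i"
    using affine_local[of ell "Suc (Suc k)" \<theta> \<theta>2] 3(2,3) by simp
  also have "\<dots> = affine ell \<theta>2 (Suc (Suc k)) (relu (realization ell \<theta>2 (Suc k) x)) i"
    unfolding affine_def relu_def using IH by (auto intro!: sum.cong)
  finally show ?case by simp
qed

lemma affine_comb:
  assumes "\<And>n. n > dsum ell (k - 1) \<Longrightarrow> \<theta>3 n = t * \<theta>1 n + (1 - t) * \<theta>2 n" "i \<ge> 1"
  shows "affine ell \<theta>3 k y i = t * affine ell \<theta>1 k y i + (1 - t) * affine ell \<theta>2 k y i"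
proof -
  have b: "bias ell \<theta>3 k i = t * bias ell \<theta>1 k i + (1 - t) * bias ell \<theta>2 k i"
    unfolding bias_def using assms by (intro assms(1)) auto
  have w: "wgt ell \<theta>3 k i j = t * wgt ell \<theta>1 k i j + (1 - t) * wgt ell \<theta>2 k i j"
    if "j \<in> {1..ell (k - 1)}" for j
    unfolding wgt_def using that by (intro assms(1)) auto
  have "affine ell \<theta>3 k y i = t * bias ell \<theta>1 k i + (1 - t) * bias ell \<theta>2 k i
     + (\<Sum>j=1..ell (k - 1). t * (wgt ell \<theta>1 k i j * y j) + (1 - t) * (wgt ell \<theta>2 k i j * y j))"
    unfolding affine_def b
  proof (intro arg_cong2[where f="(+)"] refl sum.cong)
    fix j assume "j \<in> {1..ell (k - 1)}"
    then show "wgt ell \<theta>3 k i j * y j = t * (wgt ell \<theta>1 k i j * y j) + (1 - t) * (wgt ell \<theta>2 k i j * y j)"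
      using w by (simp add: distrib_right)
  qed
  also have "\<dots> = t * affine ell \<theta>1 k y i + (1 - t) * affine ell \<theta>2 k y i"
    unfolding affine_def sum.distrib sum_distrib_left[symmetric] by (simp add: algebra_simps)
  finally show ?thesis .
qed

lemma sq_convex:
  fixes t p q c :: real
  assumes "0 \<le> t" "t \<le> 1"
  shows "(t * p + (1 - t) * q - c)\<^sup>2 \<le> t * (p - c)\<^sup>2 + (1 - t) * (q - c)\<^sup>2"
proof -
  have "t * (p - c)\<^sup>2 + (1 - t) * (q - c)\<^sup>2 - (t * p + (1 - t) * q - c)\<^sup>2
        = t * (1 - t) * (p - q)\<^sup>2"
    by (simp add: power2_eq_square algebra_simps)
  moreover have "t * (1 - t) * (p - q)\<^sup>2 \<ge> 0" using assms by simp
  ultimately show ?thesis by linarith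
qed

theorem proposition2p15:
  fixes L :: nat and ell :: "nat \<Rightarrow> nat" and a b :: real
    and \<mu> :: "(nat \<Rightarrow> real) measure" and f :: "(nat \<Rightarrow> real) \<Rightarrow> nat \<Rightarrow> real"
    and \<theta> :: "nat \<Rightarrow> real" and LL :: "(nat \<Rightarrow> real) \<Rightarrow> real"
    and v w :: "nat \<Rightarrow> real" and t :: real
  assumes L: "L \<ge> 1"
    and ell_pos: "\<And>k. ell k \<ge> 1"
    and ab: "a < b"
    and sets_mu: "sets \<mu> = sets (cube_borel (ell 0) a b)"
    and finite_mu: "emeasure \<mu> (space \<mu>) < \<infinity>"
    and f_meas: "\<And>i. i \<in> {1..ell L} \<Longrightarrow> (\<lambda>x. f x i) \<in> borel_measurable \<mu>"
    and integrable_loss: "\<And>\<eta>. integrable \<mu> (sqerr ell L f \<eta>)"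
    and LL_def: "\<And>u. LL u = loss ell L \<mu> f
                   (\<lambda>j. if j \<le> dsum ell (L - 1) then \<theta> j else u (j - dsum ell (L - 1)))"
    and lam: "t \<in> {0..1}"
  shows "LL (\<lambda>j. t * v j + (1 - t) * w j) \<le> t * LL v + (1 - t) * LL w"
proof -
  define D where "D = dsum ell (L - 1)"
  define P where "P u = (\<lambda>j. if j \<le> D then \<theta> j else u (j - D))" for u :: "nat \<Rightarrow> real"
  define u3 where "u3 = (\<lambda>j. t * v j + (1 - t) * w j)"
  have comb: "P u3 n = t * P v n + (1 - t) * P w n" if "n > D" for n
    using that unfolding P_def u3_def by simp
  have real_comb: "realization ell (P u3) L x i
      = t * realization ell (P v) L x i + (1 - t) * realization ell (P w) L x i"
    if "i \<ge> 1" for x i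
  proof (cases L)
    case 0 then show ?thesis using L by simp
  next
    case (Suc m)
    show ?thesis
    proof (cases m)
      case 0
      have L1: "L = 1" using Suc 0 by simp
      have D0: "dsum ell (1 - 1) = D" unfolding D_def L1 by simp
      have "affine ell (P u3) 1 x i = t * affine ell (P v) 1 x i + (1 - t) * affine ell (P w) 1 x i"
        by (rule affine_comb) (use comb that D0 in auto)
      then show ?thesis unfolding L1 by simp
    next
      case (Suc k)
      have loc: "realization ell (P u) (Suc k) x j = realization ell (P u') (Suc k) x j"
        if "j \<in> {1..ell (Suc k)}" for u u' j
        using that \<open>L = Suc m\<close> Suc
        by (intro real_local) (auto simp: P_def D_def)
      let ?y = "relu (realization ell (P v) (Suc k) x)"
      have e: "relu (realization ell (P u) (Suc k) x) j = ?y j" if "j \<in> {1..ell (Suc k)}" for u j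
        unfolding relu_def using loc[OF that, of u v] by simp
      have aff: "affine ell (P u) (Suc (Suc k)) (relu (realization ell (P u) (Suc k) x)) i
           = affine ell (P u) (Suc (Suc k)) ?y i" for u
        unfolding affine_def
      proof (intro arg_cong2[where f="(+)"] refl sum.cong)
        fix j assume j: "j \<in> {1..ell (Suc (Suc k) - 1)}"
        show "wgt ell (P u) (Suc (Suc k)) i j * relu (realization ell (P u) (Suc k) x) j
            = wgt ell (P u) (Suc (Suc k)) i j * ?y j"
          using e[of j u] j by simp
      qed
      have L2: "L = Suc (Suc k)" using \<open>L = Suc m\<close> Suc by simp
      have D2: "dsum ell (Suc (Suc k) - 1) = D" unfolding D_def L2 by simp
      have "affine ell (P u3) (Suc (Suc k)) ?y i
          = t * affine ell (P v) (Suc (Suc k)) ?y i + (1 - t) * affine ell (P w) (Suc (Suc k)) ?y i"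
        by (rule affine_comb) (use comb that D2 in auto)
      then show ?thesis unfolding L2 realization.simps aff[of u3] aff[of w] .

    qed
  qed
  have pt: "sqerr ell L f (P u3) x \<le> t * sqerr ell L f (P v) x + (1 - t) * sqerr ell L f (P w) x" for x
  proof -
    have "sqerr ell L f (P u3) x = (\<Sum>i=1..ell L.
        (t * realization ell (P v) L x i + (1 - t) * realization ell (P w) L x i - f x i)\<^sup>2)"
      unfolding sqerr_def using real_comb by (auto intro!: sum.cong)
    also have "\<dots> \<le> (\<Sum>i=1..ell L. t * (realization ell (P v) L x i - f x i)\<^sup>2
        + (1 - t) * (realization ell (P w) L x i - f x i)\<^sup>2)"
      using lam by (intro sum_mono sq_convex) auto
    also have "\<dots> = t * sqerr ell L f (P v) x + (1 - t) * sqerr ell L f (P w) x"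
      unfolding sqerr_def by (simp add: sum.distrib sum_distrib_left)
    finally show ?thesis .
  qed
  have "LL u3 = (\<integral>x. sqerr ell L f (P u3) x \<partial>\<mu>)"
    using LL_def unfolding loss_def P_def D_def by simp
  also have "\<dots> \<le> (\<integral>x. t * sqerr ell L f (P v) x + (1 - t) * sqerr ell L f (P w) x \<partial>\<mu>)"
    using pt integrable_loss by (intro integral_mono) auto
  also have "\<dots> = t * (\<integral>x. sqerr ell L f (P v) x \<partial>\<mu>) + (1 - t) * (\<integral>x. sqerr ell L f (P w) x \<partial>\<mu>)"
    using integrable_loss by simp
  also have "\<dots> = t * LL v + (1 - t) * LL w"
    using LL_def unfolding loss_def P_def D_def by simp
  finally show ?thesis unfolding u3_def .
qed

end
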